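(* Let $\delta\in(0,1)$, let $\mathbf{k}$ be a reproducing kernel, and run $\mathrm{KH}(\delta)$ on an input sequence $\mathcal{X}_{\mathrm{in}}=(x_i)_{i=1}^{n_{\mathrm{in}}}$ with $n_{\mathrm{in}}\ge2$ even. Then there is an event $\mathcal{E}$ with probability at least $1-\delta/2$ such that, for all $i\in[n_{\mathrm{in}}/2]$, $\frac{1}{2i}\psi_i$ is $(\mathbf{k},\nu_i)$-sub-Gaussian on $\mathcal{E}$ with $$\nu_i=b_{\max,i}\frac{\sqrt{\log(2n_{\mathrm{in}}/\delta)}}{2i}=\frac{\sqrt{\log(2n_{\mathrm{in}}/\delta)}}{2i}\max_{j\in[i]}\mathrm{MMD}_{\mathbf{k}}(\delta_{x_{2j-1}},\delta_{x_{2j}})\le\frac{\sqrt{\log(2n_{\mathrm{in}}/\delta)}}{2i}\cdot2\min\Big(\max_{x\in\mathcal{X}_{\mathrm{in}}}\sqrt{\mathbf{k}(x,x)},\ \max_{x\in\mathcal{X}_{\mathrm{in}}}\mathrm{MMD}_{\mathbf{k}}(\delta_x,\mathbb{P}_{\mathrm{in}})\Big).$$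
   Context: Kernel Halving $\mathrm{KH}(\delta)$: input $(x_1,\dots,x_{n_{\mathrm{in}}})$ with $n_{\mathrm{in}}$ even and kernel $\mathbf{k}$ with RKHS $\mathcal{H}_{\mathbf{k}}$. Set ordered lists $S_1=S_2=\emptyset$, $\psi_0=0\in\mathcal{H}_{\mathbf{k}}$, $b_{\max,0}=0$. For $i=1,\dots,n_{\mathrm{in}}/2$: let $(x,x')=(x_{2i-1},x_{2i})$, $f_i=\mathbf{k}(x_{2i-1},\cdot)-\mathbf{k}(x_{2i},\cdot)$, $b_i=\|f_i\|_{\mathbf{k}}=\sqrt{\mathbf{k}(x,x)+\mathbf{k}(x',x')-2\mathbf{k}(x,x')}$, $b_{\max,i}=\max(b_i,b_{\max,i-1})$, $a_i=b_ib_{\max,i}(\tfrac12+\log(2n_{\mathrm{in}}/\delta))$, $\alpha_i=\langle\psi_{i-1},f_i\rangle_{\mathbf{k}}=\sum_{j=1}^{2i-2}(\mathbf{k}(x_j,x)-\mathbf{k}(x_j,x'))-2\sum_{z\in S_1}(\mathbf{k}(z,x)-\mathbf{k}(z,x'))$. With probability $\min(1,\tfrac12(1-\alpha_i/a_i)_+)$ (fresh randomness) set $\eta_i=1$ and swap $x$ and $x'$; otherwise $\eta_i=-1$. Append $x$ to $S_1$, $x'$ to $S_2$, set $\psi_i=\psi_{i-1}+\eta_if_i$ (so $\psi_i=\sum_{y\in S_2}\mathbf{k}(y,\cdot)-\sum_{y\in S_1}\mathbf{k}(y,\cdot)$). Output $\mathcal{X}_{\mathrm{out}}=S_1$. Here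 $(a)_+=\max(a,0)$. $\mathbb{P}_{\mathrm{in}}$ is the empirical distribution of $\mathcal{X}_{\mathrm{in}}$, $\delta_x$ the point mass at $x$, and $\mathrm{MMD}_{\mathbf{k}}(\mu,\tilde\mu)=\sup_{\|f\|_{\mathbf{k}}\le1}|\mathbb{E}_\mu f-\mathbb{E}_{\tilde\mu}f|$. A random $\phi\in\mathcal{H}_{\mathbf{k}}$ is $(\mathbf{k},\nu)$-sub-Gaussian on $\mathcal{E}$ if $\mathbb{E}[\exp(\langle f,\phi\rangle_{\mathbf{k}})\mathbf{1}_{\mathcal{E}}]\le\exp(\frac{\nu^2}{2}\|f\|_{\mathbf{k}}^2)$ for all $f\in\mathcal{H}_{\mathbf{k}}$. *)

theory Defs
  imports "HOL-Probability.Probability"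
begin

text \<open>The RKHS of the kernel
  is (isometrically) the closed linear span of the feature vectors; an element f of it
  is evaluated at x as inner f (Phi x).\<close>

definition fm_kernel :: "('x \<Rightarrow> 'h::real_inner) \<Rightarrow> 'x \<Rightarrow> 'x \<Rightarrow> real" where
  "fm_kernel Phi x y = inner (Phi x) (Phi y)"

definition rkhs :: "('x \<Rightarrow> 'h::real_inner) \<Rightarrow> 'h set" where
  "rkhs Phi = closure (span (range Phi))"

definition mmd :: "('x \<Rightarrow> 'h::real_inner) \<Rightarrow> 'x pmf \<Rightarrow> 'x pmf \<Rightarrow> real" where
  "mmd Phi p q = (SUP f \<in> {f \<in> rkhs Phi. norm f \<le> 1}.
      \<bar>measure_pmf.expectation p (\<lambda>x. inner f (Phi x))
       - measure_pmf.expectation q (\<lambda>x. inner f (Phi x))\<bar>)"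

definition sub_gaussian_on ::
  "('x \<Rightarrow> 'h::real_inner) \<Rightarrow> 'w pmf \<Rightarrow> 'w set \<Rightarrow> ('w \<Rightarrow> 'h) \<Rightarrow> real \<Rightarrow> bool" where
  "sub_gaussian_on Phi M E phi nu =
     (\<forall>f \<in> rkhs Phi. measure_pmf.expectation M (\<lambda>w. exp (inner f (phi w)) * indicator E w)
        \<le> exp (nu\<^sup>2 / 2 * (norm f)\<^sup>2))"

text \<open>State of Kernel Halving: (S1, S2, psi, bmax).\<close>
type_synonym ('x, 'h) kh_state = "'x list \<times> 'x list \<times> 'h \<times> real"

definition kh_psi :: "('x, 'h) kh_state \<Rightarrow> 'h" where
  "kh_psi st = fst (snd (snd st))"

definition kh_S1 :: "('x, 'h) kh_state \<Rightarrow> 'x list" where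
  "kh_S1 st = fst st"

definition kh_step :: "real \<Rightarrow> nat \<Rightarrow> ('x \<Rightarrow> 'h::real_inner) \<Rightarrow> 'x \<times> 'x
    \<Rightarrow> ('x, 'h) kh_state \<Rightarrow> ('x, 'h) kh_state pmf" where
  "kh_step delta n Phi xx st =
    (case xx of (x, x') \<Rightarrow> case st of (S1, S2, psi, bm) \<Rightarrow>
      let k = fm_kernel Phi;
          f = Phi x - Phi x';
          b = sqrt (k x x + k x' x' - 2 * k x x');
          bm' = max b bm;
          a = b * bm' * (1/2 + ln (2 * real n / delta));
          alpha = inner psi f;
          p = min 1 ((1/2) * max 0 (1 - alpha / a))
      in map_pmf (\<lambda>eta. if eta then (S1 @ [x'], S2 @ [x], psi + f, bm')
                                else (S1 @ [x], S2 @ [x'], psi - f, bm'))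
                 (bernoulli_pmf p))"

primrec kh_iter :: "real \<Rightarrow> nat \<Rightarrow> ('x \<Rightarrow> 'h::real_inner) \<Rightarrow> ('x \<times> 'x) list
    \<Rightarrow> ('x, 'h) kh_state \<Rightarrow> ('x, 'h) kh_state list pmf" where
  "kh_iter delta n Phi [] st = return_pmf [st]"
| "kh_iter delta n Phi (pr # prs) st =
     bind_pmf (kh_step delta n Phi pr st)
       (\<lambda>st'. map_pmf (\<lambda>tr. st # tr) (kh_iter delta n Phi prs st'))"

definition kh_pairs :: "'x list \<Rightarrow> ('x \<times> 'x) list" where
  "kh_pairs xs = map (\<lambda>i. (xs ! (2 * i), xs ! (2 * i + 1))) [0..<length xs div 2]"

text \<open>KH(delta) on input xs: distribution of the trajectory; entry i is the state
  after round i (so kh_psi (tr ! i) is psi_i).\<close>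
definition KH :: "real \<Rightarrow> ('x \<Rightarrow> 'h::real_inner) \<Rightarrow> 'x list \<Rightarrow> ('x, 'h) kh_state list pmf" where
  "KH delta Phi xs = kh_iter delta (length xs) Phi (kh_pairs xs) ([], [], 0, 0)"

text \<open>b_j for j \<ge> 1 (1-indexed, pair (x_{2j-1}, x_{2j})) and b_{max,i}.\<close>
definition kh_b :: "('x \<Rightarrow> 'h::real_inner) \<Rightarrow> 'x list \<Rightarrow> nat \<Rightarrow> real" where
  "kh_b Phi xs j = (let x = xs ! (2 * j - 2); x' = xs ! (2 * j - 1); k = fm_kernel Phi
                    in sqrt (k x x + k x' x' - 2 * k x x'))"

fun kh_bmax :: "('x \<Rightarrow> 'h::real_inner) \<Rightarrow> 'x list \<Rightarrow> nat \<Rightarrow> real" where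
  "kh_bmax Phi xs 0 = 0"
| "kh_bmax Phi xs (Suc i) = max (kh_b Phi xs (Suc i)) (kh_bmax Phi xs i)"

end

theory Submission
  imports Defs "HOL-Analysis.Harmonic_Numbers"
begin

definition wstep :: "('h::real_inner \<times> real) \<Rightarrow> 'h \<Rightarrow> 'h pmf" where
 "wstep w psi = map_pmf (\<lambda>eta. if eta then psi + fst w else psi - fst w)
    (bernoulli_pmf (min 1 ((1/2) * max 0 (1 - inner psi (fst w) / snd w))))"

primrec walk :: "('h::real_inner \<times> real) list \<Rightarrow> 'h \<Rightarrow> 'h list pmf" where
  "walk [] psi = return_pmf [psi]"
| "walk (w # ws) psi = bind_pmf (wstep w psi) (\<lambda>psi'. map_pmf (\<lambda>tr. psi # tr) (walk ws psi'))"

definition bp :: "('x \<Rightarrow> 'h::real_inner) \<Rightarrow> 'x \<times> 'x \<Rightarrow> real" where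
  "bp Phi xx = (case xx of (x, x') \<Rightarrow> sqrt (fm_kernel Phi x x + fm_kernel Phi x' x' - 2 * fm_kernel Phi x x'))"

fun kparams :: "real \<Rightarrow> nat \<Rightarrow> ('x \<Rightarrow> 'h::real_inner) \<Rightarrow> real \<Rightarrow> ('x \<times> 'x) list \<Rightarrow> ('h \<times> real) list" where
  "kparams d n Phi bm [] = []"
| "kparams d n Phi bm ((x, x') # prs) =
     (Phi x - Phi x', bp Phi (x, x') * max (bp Phi (x, x')) bm * (1/2 + ln (2 * real n / d)))
       # kparams d n Phi (max (bp Phi (x, x')) bm) prs"

lemma kh_link:
  "map_pmf (map kh_psi) (kh_iter d n Phi prs (S1, S2, psi, bm)) = walk (kparams d n Phi bm prs) psi"
proof (induction prs arbitrary: S1 S2 psi bm)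
  case Nil
  then show ?case by (simp add: kh_psi_def)
next
  case (Cons pr prs)
  obtain x x' where pr: "pr = (x, x')" by (cases pr)
  have IH': "map_pmf (\<lambda>x. p # map kh_psi x) (kh_iter d n Phi prs (a, b, c, e))
      = map_pmf ((#) p) (walk (kparams d n Phi e prs) c)" for a b c e p
  proof -
    have "map_pmf (\<lambda>x. p # map kh_psi x) (kh_iter d n Phi prs (a, b, c, e))
      = map_pmf ((#) p) (map_pmf (map kh_psi) (kh_iter d n Phi prs (a, b, c, e)))"
      by (simp add: map_pmf_comp)
    then show ?thesis by (simp add: Cons.IH)
  qed
  have ps: "kh_psi (a, b, c, e) = c" for a b c e by (simp add: kh_psi_def)
  show ?case
    unfolding pr kh_iter.simps kparams.simps walk.simps kh_step_def wstep_def
    by (simp add: Let_def map_bind_pmf bind_map_pmf map_pmf_comp IH' ps bp_def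
          fm_kernel_def if_distrib cong: if_cong)
qed

lemma finite_wstep: "finite (set_pmf (wstep w psi))"
  unfolding wstep_def by (simp add: UNIV_bool)

lemma walk_props: "finite (set_pmf (walk ws psi)) \<and>
   (\<forall>tr \<in> set_pmf (walk ws psi). length tr = Suc (length ws) \<and> hd tr = psi)"
proof (induction ws arbitrary: psi)
  case Nil then show ?case by simp
next
  case (Cons w ws)
  show ?case using Cons.IH finite_wstep[of w psi] by auto
qed

lemma walk_finite: "finite (set_pmf (walk ws psi))" using walk_props by blast
lemma walk_length: "tr \<in> set_pmf (walk ws psi) \<Longrightarrow> length tr = Suc (length ws)"
  using walk_props by blast

lemma walk_snoc: "walk (ws @ [w]) psi =
   bind_pmf (walk ws psi) (\<lambda>tr. map_pmf (\<lambda>p. tr @ [p]) (wstep w (last tr)))"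
proof (induction ws arbitrary: psi)
  case Nil
  then show ?case by (simp add: bind_return_pmf map_pmf_def)
next
  case (Cons v ws)
  have "walk ((v # ws) @ [w]) psi = bind_pmf (wstep v psi) (\<lambda>p1. map_pmf ((#) psi)
      (bind_pmf (walk ws p1) (\<lambda>tr. map_pmf (\<lambda>p. tr @ [p]) (wstep w (last tr)))))"
    by (simp add: Cons.IH)
  also have "\<dots> = bind_pmf (wstep v psi) (\<lambda>p1. bind_pmf (walk ws p1)
      (\<lambda>tr. map_pmf (\<lambda>p. (psi # tr) @ [p]) (wstep w (last (psi # tr)))))"
  proof (intro bind_pmf_cong refl)
    fix p1 assume "p1 \<in> set_pmf (wstep v psi)"
    show "map_pmf ((#) psi) (bind_pmf (walk ws p1) (\<lambda>tr. map_pmf (\<lambda>p. tr @ [p]) (wstep w (last tr))))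
      = bind_pmf (walk ws p1) (\<lambda>tr. map_pmf (\<lambda>p. (psi # tr) @ [p]) (wstep w (last (psi # tr))))"
      unfolding map_bind_pmf
    proof (intro bind_pmf_cong refl)
      fix tr assume "tr \<in> set_pmf (walk ws p1)"
      then have "tr \<noteq> []" using walk_length by fastforce
      then show "map_pmf ((#) psi) (map_pmf (\<lambda>p. tr @ [p]) (wstep w (last tr))) =
         map_pmf (\<lambda>p. (psi # tr) @ [p]) (wstep w (last (psi # tr)))"
        by (simp add: map_pmf_comp)
    qed
  qed
  also have "\<dots> = bind_pmf (walk (v # ws) psi) (\<lambda>tr. map_pmf (\<lambda>p. tr @ [p]) (wstep w (last tr)))"
    by (simp add: bind_assoc_pmf bind_map_pmf)
  finally show ?case .
qed

lemma walk_take: "map_pmf (take (Suc i)) (walk ws psi) = walk (take i ws) psi"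
proof (induction ws arbitrary: i psi)
  case Nil then show ?case by simp
next
  case (Cons w ws)
  show ?case
  proof (cases i)
    case 0
    then show ?thesis by (simp add: map_bind_pmf map_pmf_comp)
  next
    case (Suc j)
    have "map_pmf (take (Suc i)) (walk (w # ws) psi) =
      bind_pmf (wstep w psi) (\<lambda>p1. map_pmf ((#) psi) (map_pmf (take (Suc j)) (walk ws p1)))"
      by (simp add: Suc map_bind_pmf map_pmf_comp)
    then show ?thesis by (simp add: Cons.IH Suc)
  qed
qed

lemma integral_bind_fin:
  fixes f :: "'b \<Rightarrow> real"
  assumes M: "finite (set_pmf M)" and N: "\<And>x. x \<in> set_pmf M \<Longrightarrow> finite (set_pmf (N x))"
  shows "measure_pmf.expectation (bind_pmf M N) f =
     measure_pmf.expectation M (\<lambda>x. measure_pmf.expectation (N x) f)"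
proof -
  define A where "A = set_pmf (bind_pmf M N)"
  have A: "finite A" using M N by (simp add: A_def)
  have sub: "x \<in> set_pmf M \<Longrightarrow> set_pmf (N x) \<subseteq> A" for x by (auto simp: A_def)
  have "measure_pmf.expectation (bind_pmf M N) f = (\<Sum>a\<in>A. f a * pmf (bind_pmf M N) a)"
    by (rule integral_measure_pmf_real[OF A]) (auto simp: A_def)
  also have "\<dots> = (\<Sum>a\<in>A. f a * (\<Sum>x\<in>set_pmf M. pmf (N x) a * pmf M x))"
    by (intro sum.cong refl arg_cong2[where f="(*)"], unfold pmf_bind,
        rule integral_measure_pmf_real[OF M]) auto
  also have "\<dots> = (\<Sum>x\<in>set_pmf M. (\<Sum>a\<in>A. f a * pmf (N x) a) * pmf M x)"
    by (simp add: sum_distrib_left sum_distrib_right mult_ac sum.swap[of _ A])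
  also have "\<dots> = (\<Sum>x\<in>set_pmf M. measure_pmf.expectation (N x) f * pmf M x)"
  proof (intro sum.cong refl arg_cong2[where f="(*)"])
    fix x assume x: "x \<in> set_pmf M"
    show "(\<Sum>a\<in>A. f a * pmf (N x) a) = measure_pmf.expectation (N x) f"
      by (rule integral_measure_pmf_real[OF A, symmetric]) (use sub[OF x] in auto)
  qed
  also have "\<dots> = measure_pmf.expectation M (\<lambda>x. measure_pmf.expectation (N x) f)"
    by (rule integral_measure_pmf_real[OF M, symmetric]) auto
  finally show ?thesis .
qed

lemma two_point:
  fixes p t :: real
  assumes "0 \<le> p" "p \<le> 1"
  shows "p * exp t + (1 - p) * exp (- t) \<le> exp (t\<^sup>2 / 2 + (2 * p - 1) * t)"
proof -
  have main: "q * exp s + (1 - q) * exp (- s) \<le> exp (s\<^sup>2 / 2 + (2 * q - 1) * s)"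
    if q: "0 \<le> q" "q \<le> 1" and s: "0 \<le> s" for q s :: real
  proof -
    have h: "- (2 * s) * q + ln (1 + q * (exp (2 * s) - 1)) \<le> (2 * s)\<^sup>2 / 8"
      using Hoeffdings_lemma_aux[of "2 * s" q] s q by simp
    have pos: "0 < 1 + q * (exp (2 * s) - 1)"
      using q s by (intro add_pos_nonneg mult_nonneg_nonneg) auto
    have "ln (1 + q * (exp (2 * s) - 1)) \<le> s\<^sup>2 / 2 + 2 * s * q"
      using h by (simp add: power2_eq_square)
    then have "1 + q * (exp (2 * s) - 1) \<le> exp (s\<^sup>2 / 2 + 2 * s * q)"
      using pos by (metis exp_le_cancel_iff exp_ln)
    then have "exp (- s) * (1 + q * (exp (2 * s) - 1)) \<le> exp (- s) * exp (s\<^sup>2 / 2 + 2 * s * q)"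
      by (intro mult_left_mono) auto
    also have "exp (- s) * exp (s\<^sup>2 / 2 + 2 * s * q) = exp (s\<^sup>2 / 2 + (2 * q - 1) * s)"
      by (simp add: exp_add[symmetric] algebra_simps)
    also have "exp (- s) * (1 + q * (exp (2 * s) - 1)) = q * exp s + (1 - q) * exp (- s)"
    proof -
      have "exp (- s) * exp (2 * s) = exp s" by (simp add: exp_add[symmetric])
      then show ?thesis by (simp add: algebra_simps)
    qed
    finally show ?thesis .
  qed
  show ?thesis
  proof (cases "0 \<le> t")
    case True then show ?thesis using main[of p t] assms by simp
  next
    case False
    have "(1 - p) * exp (- t) + (1 - (1 - p)) * exp (- (- t)) \<le>
        exp ((- t)\<^sup>2 / 2 + (2 * (1 - p) - 1) * (- t))"
      using main[of "1 - p" "- t"] assms False by simp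
    then show ?thesis by (simp add: algebra_simps)
  qed
qed

lemma step_bound:
  fixes u psi f :: "'h::real_inner" and a :: real
  assumes ok: "\<bar>inner psi f\<bar> \<le> a" and af: "0 < a \<or> f = 0"
  shows "measure_pmf.expectation (wstep (f, a) psi) (\<lambda>p. exp (inner u p)) \<le>
    exp (inner (u - (inner u f / a) *\<^sub>R f) psi) * exp ((inner u f)\<^sup>2 / 2)"
proof (cases "f = 0")
  case True
  then show ?thesis by (simp add: wstep_def)
next
  case False
  with af have a: "0 < a" by auto
  define al where "al = inner psi f"
  define t where "t = inner u f"
  define p where "p = (1 - al / a) / 2"
  have al: "\<bar>al\<bar> \<le> a" using ok by (simp add: al_def)
  have "- 1 \<le> al / a" "al / a \<le> 1" using al a by (auto simp: field_simps abs_le_iff)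
  then have p01: "0 \<le> p" "p \<le> 1" by (auto simp: p_def)
  have pe: "min 1 ((1/2) * max 0 (1 - inner psi f / a)) = p"
    using p01 by (simp add: p_def al_def)
  have "measure_pmf.expectation (wstep (f, a) psi) (\<lambda>p. exp (inner u p))
     = p * exp (inner u psi + t) + (1 - p) * exp (inner u psi - t)"
    unfolding wstep_def using pe p01 by (simp add: t_def inner_diff_right inner_add_right)
  also have "\<dots> = exp (inner u psi) * (p * exp t + (1 - p) * exp (- t))"
    by (simp add: exp_add exp_diff algebra_simps exp_minus field_simps)
  also have "\<dots> \<le> exp (inner u psi) * exp (t\<^sup>2 / 2 + (2 * p - 1) * t)"
    by (intro mult_left_mono two_point p01) auto
  also have "\<dots> = exp (inner (u - (inner u f / a) *\<^sub>R f) psi) * exp ((inner u f)\<^sup>2 / 2)"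
  proof -
    have "inner (u - (inner u f / a) *\<^sub>R f) psi = inner u psi - (inner u f / a) * inner f psi"
      by (simp add: inner_diff_left)
    also have "\<dots> = inner u psi - t * al / a" by (simp add: t_def al_def inner_commute)
    finally have e1: "inner (u - (inner u f / a) *\<^sub>R f) psi = inner u psi - t * al / a" .
    have e2: "(2 * p - 1) * t = - (t * al / a)" using a by (simp add: p_def field_simps)
    show ?thesis unfolding e1 t_def[symmetric] e2 by (simp add: mult_exp_exp algebra_simps al_def inner_commute)
  qed
  finally show ?thesis .
qed

lemma key_ineq:
  fixes s U T a b c L K D :: real
  assumes s: "0 \<le> s" "s \<le> c\<^sup>2 * K" and T: "0 \<le> T" "T \<le> b\<^sup>2 * U"
    and a: "0 < a" "a = b * c * D" and bc: "0 \<le> b" "b \<le> c"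
    and L: "0 < L" and D: "D = 1/2 + L" and K: "K = D\<^sup>2 / (2 * L)"
  shows "s * (U - 2 * T / a + T * b\<^sup>2 / a\<^sup>2) + T \<le> c\<^sup>2 * K * U"
proof -
  have b: "0 < b" using a bc by (cases "b = 0") auto
  have c: "0 < c" using b bc by linarith
  have Dp: "0 < D" using L D by simp
  have bU: "0 \<le> b\<^sup>2 * U" using T by linarith
  have U: "0 \<le> U" using bU b by (simp add: zero_le_mult_iff)
  have two: "0 < 2 * a - b\<^sup>2"
  proof -
    have "b\<^sup>2 \<le> b * c" using bc by (simp add: power2_eq_square mult_left_mono)
    also have "b * c < 2 * a" using a b c L D by (simp add: algebra_simps)
    finally show ?thesis by simp
  qed
  define r where "r = b\<^sup>2 * (2 * a - b\<^sup>2) / a\<^sup>2"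
  have r1: "r \<le> 1"
  proof -
    have "b\<^sup>2 * (2 * a - b\<^sup>2) \<le> a\<^sup>2"
      using sum_power2_ge_zero[of "a - b\<^sup>2" 0] by (simp add: power2_eq_square algebra_simps)
    moreover have "0 < a\<^sup>2" using a(1) by simp
    ultimately show ?thesis unfolding r_def by (simp add: divide_le_eq_1)
  qed
  have star: "b\<^sup>2 \<le> c\<^sup>2 * K * r"
  proof -
    have "b * (2 * L + 1) \<le> c * (2 * L + 1)" using bc L by (intro mult_right_mono) auto
    then have "b * (2 * L + 1) \<le> c * (1 + 2 * L)" by (simp add: add.commute)
    then have "2 * L * b \<le> 2 * c * D - b" using D by (simp add: algebra_simps)
    then have "b * c\<^sup>2 * D\<^sup>2 * (2 * L * b) \<le> b * c\<^sup>2 * D\<^sup>2 * (2 * c * D - b)"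
      using b by (intro mult_left_mono) auto
    then have h3: "2 * L * a\<^sup>2 \<le> c\<^sup>2 * D\<^sup>2 * (2 * a - b\<^sup>2)"
      using a(2) by (simp add: power2_eq_square algebra_simps)
    have a2: "0 < a\<^sup>2" using a(1) by simp
    have "1 \<le> c\<^sup>2 * D\<^sup>2 * (2 * a - b\<^sup>2) / (2 * L * a\<^sup>2)"
      using h3 a2 L by (simp add: le_divide_eq_1)
    then have "b\<^sup>2 * 1 \<le> b\<^sup>2 * (c\<^sup>2 * D\<^sup>2 * (2 * a - b\<^sup>2) / (2 * L * a\<^sup>2))"
      by (intro mult_left_mono) auto
    also have "\<dots> = c\<^sup>2 * K * r"
      using a2 L unfolding K r_def by (simp add: field_simps)
    finally show ?thesis by simp
  qed
  define q where "q = s * (2 * a - b\<^sup>2) / a\<^sup>2"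
  have eq: "s * (U - 2 * T / a + T * b\<^sup>2 / a\<^sup>2) + T = s * U + T * (1 - q)"
    using a(1) by (simp add: q_def field_simps power2_eq_square)
  show ?thesis
  proof (cases "q \<le> 1")
    case False
    then have "T * (1 - q) \<le> 0" using T by (simp add: mult_nonneg_nonpos)
    moreover have "s * U \<le> c\<^sup>2 * K * U" using s U by (intro mult_right_mono) auto
    ultimately show ?thesis using eq by linarith
  next
    case True
    have "T * (1 - q) \<le> b\<^sup>2 * U * (1 - q)" using T True by (intro mult_right_mono) auto
    also have "b\<^sup>2 * U * (1 - q) = U * (b\<^sup>2 - s * r)"
      using a(1) by (simp add: q_def r_def field_simps power2_eq_square)
    finally have 1: "s * (U - 2 * T / a + T * b\<^sup>2 / a\<^sup>2) + T \<le> U * (s * (1 - r) + b\<^sup>2)"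
      using eq by (simp add: algebra_simps)
    have "s * (1 - r) \<le> c\<^sup>2 * K * (1 - r)" using s r1 by (intro mult_right_mono) auto
    then have "s * (1 - r) + b\<^sup>2 \<le> c\<^sup>2 * K" using star by (simp add: algebra_simps)
    then have "U * (s * (1 - r) + b\<^sup>2) \<le> U * (c\<^sup>2 * K)" using U by (intro mult_left_mono) auto
    with 1 show ?thesis by (simp add: mult_ac)
  qed
qed

definition Eall :: "('h::real_inner \<times> real) list \<Rightarrow> 'h list set" where
  "Eall ws = {tr. \<forall>j<length ws. \<bar>inner (tr ! j) (fst (ws ! j))\<bar> \<le> snd (ws ! j)}"

definition good :: "('h::real_inner \<times> real) list \<Rightarrow> (nat \<Rightarrow> real) \<Rightarrow> real \<Rightarrow> bool" where
  "good W c L \<longleftrightarrow> 0 < L \<and>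
     (\<forall>j<length W. norm (fst (W ! j)) \<le> c j \<and> snd (W ! j) = norm (fst (W ! j)) * c j * (1/2 + L)) \<and>
     (\<forall>j. Suc j < length W \<longrightarrow> c j \<le> c (Suc j))"

definition KK :: "real \<Rightarrow> real" where "KK L = (1/2 + L)\<^sup>2 / (2 * L)"

lemma c_mono:
  assumes "good W c L" "i \<le> j" "j < length W" shows "c i \<le> c j"
  using assms(2,3)
proof (induction j rule: dec_induct)
  case base then show ?case by simp
next
  case (step k)
  then have "c k \<le> c (Suc k)" using assms(1) by (simp add: good_def)
  with step show ?case by simp
qed

lemma c_nonneg: "good W c L \<Longrightarrow> j < length W \<Longrightarrow> 0 \<le> c j"
  unfolding good_def by (meson norm_ge_zero order_trans)

lemma exp_mono_pmf:
  fixes f g :: "'a \<Rightarrow> real"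
  assumes "finite (set_pmf M)" "\<And>x. x \<in> set_pmf M \<Longrightarrow> f x \<le> g x"
  shows "measure_pmf.expectation M f \<le> measure_pmf.expectation M g"
  using assms
  by (intro integral_mono_AE) (auto simp: AE_measure_pmf_iff integrable_measure_pmf_finite)

lemma Eall_snoc:
  assumes "length tr = Suc (length T)"
  shows "(tr @ [p] \<in> Eall (T @ [(f, a)])) \<longleftrightarrow> tr \<in> Eall T \<and> \<bar>inner (last tr) f\<bar> \<le> a"
proof -
  have lt: "last tr = tr ! length T" using assms by (metis diff_Suc_1 last_conv_nth list.size(3) nat.distinct(1))
  show ?thesis
    unfolding Eall_def using assms
    by (auto simp: less_Suc_eq nth_append lt)
qed

lemma norm_diff_sq:
  fixes u f :: "'h::real_inner"
  shows "(norm (u - r *\<^sub>R f))\<^sup>2 = (norm u)\<^sup>2 - 2 * r * inner u f + r\<^sup>2 * (norm f)\<^sup>2"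
  unfolding power2_norm_eq_inner
  by (simp add: inner_diff_left inner_diff_right inner_commute power2_eq_square algebra_simps)

lemma cs_sq:
  fixes u f :: "'h::real_inner"
  shows "(inner u f)\<^sup>2 \<le> (norm f)\<^sup>2 * (norm u)\<^sup>2"
proof -
  have "\<bar>inner u f\<bar> \<le> norm u * norm f" by (rule Cauchy_Schwarz_ineq2)
  then have "\<bar>inner u f\<bar>\<^sup>2 \<le> (norm u * norm f)\<^sup>2" by (intro power_mono) auto
  then show ?thesis by (simp add: power_mult_distrib mult_ac)
qed

lemma SG:
  assumes g: "good W c L" and i: "i \<le> length W"
  shows "measure_pmf.expectation (walk (take i W) 0)
      (\<lambda>tr. exp (inner u (last tr)) * indicator (Eall (take i W)) tr)
     \<le> exp ((c (i - 1))\<^sup>2 * KK L / 2 * (norm u)\<^sup>2)"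
  using i
proof (induction i arbitrary: u)
  case 0
  have E: "Eall (take 0 W) = UNIV" by (simp add: Eall_def)
  have "0 \<le> (c 0)\<^sup>2 * KK L * (norm u)\<^sup>2 / 2" using g by (simp add: good_def KK_def)
  then show ?case using E by simp
next
  case (Suc i)
  have iW: "i < length W" using Suc.prems by simp
  obtain f a where w: "W ! i = (f, a)" by (cases "W ! i")
  define T where "T = take i W"
  have tS: "take (Suc i) W = T @ [(f, a)]" using iW w by (simp add: T_def take_Suc_conv_app_nth)
  have lT: "length T = i" using iW by (simp add: T_def)
  have L: "0 < L" using g by (simp add: good_def)
  have fc: "norm f \<le> c i" and ad: "a = norm f * c i * (1/2 + L)"
    using g iW w by (auto simp: good_def dest!: spec[of _ i])
  have af: "0 < a \<or> f = 0"
  proof (cases "f = 0")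
    case False
    then have "0 < norm f" by simp
    moreover have "0 < c i" using \<open>0 < norm f\<close> fc by linarith
    moreover have "0 < 1/2 + L" using L by simp
    ultimately show ?thesis by (simp add: ad)
  qed simp
  define t where "t = inner u f"
  define u' where "u' = u - (t / a) *\<^sub>R f"
  have ci: "0 \<le> c (i - 1)" "c (i - 1) \<le> c i"
    using c_nonneg[OF g] c_mono[OF g] iW by auto
  define G where "G = (\<lambda>tr. exp (inner u (last tr)) * indicator (Eall (T @ [(f, a)])) tr)"
  have "measure_pmf.expectation (walk (take (Suc i) W) 0) G =
      measure_pmf.expectation (walk T 0)
        (\<lambda>tr. measure_pmf.expectation (wstep (f, a) (last tr)) (\<lambda>p. G (tr @ [p])))"
    unfolding tS walk_snoc
    by (subst integral_bind_fin) (auto simp: walk_finite finite_wstep)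
  also have "\<dots> \<le> measure_pmf.expectation (walk T 0)
      (\<lambda>tr. exp (inner u' (last tr)) * indicator (Eall T) tr * exp (t\<^sup>2 / 2))"
  proof (rule exp_mono_pmf[OF walk_finite])
    fix tr assume tr: "tr \<in> set_pmf (walk T 0)"
    then have len: "length tr = Suc (length T)" by (rule walk_length)
    have Geq: "G (tr @ [p]) = exp (inner u p) *
        (indicator (Eall T) tr * (if \<bar>inner (last tr) f\<bar> \<le> a then 1 else 0))" for p
      unfolding G_def using Eall_snoc[OF len, of p f a] by (simp add: indicator_def)
    show "measure_pmf.expectation (wstep (f, a) (last tr)) (\<lambda>p. G (tr @ [p])) \<le>
        exp (inner u' (last tr)) * indicator (Eall T) tr * exp (t\<^sup>2 / 2)"
    proof (cases "tr \<in> Eall T \<and> \<bar>inner (last tr) f\<bar> \<le> a")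
      case True
      then have "measure_pmf.expectation (wstep (f, a) (last tr)) (\<lambda>p. G (tr @ [p])) =
          measure_pmf.expectation (wstep (f, a) (last tr)) (\<lambda>p. exp (inner u p))"
        unfolding Geq by simp
      also have "\<dots> \<le> exp (inner u' (last tr)) * exp (t\<^sup>2 / 2)"
        using step_bound[of "last tr" f a u] True af by (simp add: u'_def t_def)
      finally show ?thesis using True by simp
    next
      case False
      then have "measure_pmf.expectation (wstep (f, a) (last tr)) (\<lambda>p. G (tr @ [p])) = 0"
        unfolding Geq by (auto simp: indicator_def)
      then show ?thesis by simp
    qed
  qed
  also have "\<dots> = measure_pmf.expectation (walk T 0)
      (\<lambda>tr. exp (inner u' (last tr)) * indicator (Eall T) tr) * exp (t\<^sup>2 / 2)"
    by simp
  also have "\<dots> \<le> exp ((c (i - 1))\<^sup>2 * KK L / 2 * (norm u')\<^sup>2) * exp (t\<^sup>2 / 2)"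
    using Suc.IH[of u'] iW by (simp add: T_def)
  also have "\<dots> \<le> exp ((c (Suc i - 1))\<^sup>2 * KK L / 2 * (norm u)\<^sup>2)"
  proof -
    define s where "s = (c (i - 1))\<^sup>2 * KK L"
    have s0: "0 \<le> s" using L by (simp add: s_def KK_def)
    have s1: "s \<le> (c i)\<^sup>2 * KK L"
      unfolding s_def using ci L by (intro mult_right_mono power_mono) (auto simp: KK_def)
    have "s * (norm u')\<^sup>2 + t\<^sup>2 \<le> (c i)\<^sup>2 * KK L * (norm u)\<^sup>2"
    proof (cases "f = 0")
      case True
      then show ?thesis using s1 by (simp add: u'_def t_def mult_right_mono)
    next
      case False
      then have a0: "0 < a" using af by simp
      have "(norm u')\<^sup>2 = (norm u)\<^sup>2 - 2 * t\<^sup>2 / a + t\<^sup>2 * (norm f)\<^sup>2 / a\<^sup>2"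
        unfolding u'_def norm_diff_sq by (simp add: t_def power2_eq_square field_simps)
      moreover have "s * ((norm u)\<^sup>2 - 2 * t\<^sup>2 / a + t\<^sup>2 * (norm f)\<^sup>2 / a\<^sup>2) + t\<^sup>2
          \<le> (c i)\<^sup>2 * KK L * (norm u)\<^sup>2"
        by (rule key_ineq[where D="1/2 + L" and L=L]) (use s0 s1 cs_sq[of u f] a0 ad fc L in
            \<open>auto simp: t_def KK_def\<close>)
      ultimately show ?thesis by simp
    qed
    then have "s / 2 * (norm u')\<^sup>2 + t\<^sup>2 / 2 \<le> (c i)\<^sup>2 * KK L / 2 * (norm u)\<^sup>2" by simp
    then show ?thesis by (simp add: s_def mult_exp_exp)
  qed
  finally show ?case by (simp add: G_def tS)
qed

lemma prob_as_exp: "measure_pmf.prob M S = measure_pmf.expectation M (indicator S)"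
  by simp

lemma tail_one:
  assumes g: "good W c L" and i: "i < length W" and Wi: "W ! i = (f, a)" and f: "f \<noteq> 0"
    and v: "norm v = norm f"
  shows "measure_pmf.prob (walk (take i W) 0)
     {tr. tr \<in> Eall (take i W) \<and> a < inner (last tr) v} \<le> exp (- L)"
proof -
  define b where "b = norm f"
  define cc where "cc = c i"
  define K where "K = KK L"
  define D where "D = 1/2 + L"
  have L: "0 < L" using g by (simp add: good_def)
  have fc: "b \<le> cc" and ad: "a = b * cc * D"
    using g i Wi by (auto simp: good_def b_def cc_def D_def dest!: spec[of _ i])
  have b: "0 < b" using f by (simp add: b_def)
  have cc: "0 < cc" using b fc by linarith
  have D: "0 < D" using L by (simp add: D_def)
  have K: "0 < K" using L by (simp add: K_def KK_def)
  have a: "0 < a" using b cc D by (simp add: ad)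
  define lam where "lam = a / (cc\<^sup>2 * K * b\<^sup>2)"
  have lam: "0 < lam" using a cc K b by (simp add: lam_def)
  define S where "S = {tr. tr \<in> Eall (take i W) \<and> a < inner (last tr) v}"
  have "measure_pmf.prob (walk (take i W) 0) S =
      measure_pmf.expectation (walk (take i W) 0) (indicator S)" by simp
  also have "\<dots> \<le> measure_pmf.expectation (walk (take i W) 0)
      (\<lambda>tr. exp (inner (lam *\<^sub>R v) (last tr)) * indicator (Eall (take i W)) tr * exp (- lam * a))"
  proof (rule exp_mono_pmf[OF walk_finite])
    fix tr
    show "indicator S tr \<le> exp (inner (lam *\<^sub>R v) (last tr)) * indicator (Eall (take i W)) tr * exp (- lam * a)"
    proof (cases "tr \<in> S")
      case True
      then have "lam * a < lam * inner (last tr) v" using lam by (simp add: S_def)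
      then have "0 \<le> lam * inner (last tr) v + - lam * a" by simp
      then have "1 \<le> exp (lam * inner (last tr) v + - lam * a)" by simp
      then show ?thesis using True
        by (simp add: S_def mult_exp_exp inner_commute)
    next
      case False
      then show ?thesis by (simp add: indicator_def)
    qed
  qed
  also have "\<dots> = measure_pmf.expectation (walk (take i W) 0)
      (\<lambda>tr. exp (inner (lam *\<^sub>R v) (last tr)) * indicator (Eall (take i W)) tr) * exp (- lam * a)"
    by simp
  also have "\<dots> \<le> exp ((c (i - 1))\<^sup>2 * K / 2 * (norm (lam *\<^sub>R v))\<^sup>2) * exp (- lam * a)"
    using SG[OF g, of i "lam *\<^sub>R v"] i by (simp add: K_def)
  also have "\<dots> \<le> exp (cc\<^sup>2 * K / 2 * (norm (lam *\<^sub>R v))\<^sup>2) * exp (- lam * a)"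
  proof -
    have "0 \<le> c (i - 1)" "c (i - 1) \<le> cc" using c_nonneg[OF g] c_mono[OF g] i by (auto simp: cc_def)
    then have "(c (i - 1))\<^sup>2 \<le> cc\<^sup>2" by (intro power_mono) auto
    then have "(c (i - 1))\<^sup>2 * K / 2 * (norm (lam *\<^sub>R v))\<^sup>2 \<le> cc\<^sup>2 * K / 2 * (norm (lam *\<^sub>R v))\<^sup>2"
      using K by (intro mult_right_mono divide_right_mono) auto
    then show ?thesis by simp
  qed
  also have "\<dots> = exp (- L)"
  proof -
    have "cc\<^sup>2 * K / 2 * (norm (lam *\<^sub>R v))\<^sup>2 + - lam * a = - L"
      using b cc D L unfolding lam_def K_def KK_def D_def[symmetric] ad
      by (simp add: field_simps power2_eq_square v b_def)
    then show ?thesis by (simp add: mult_exp_exp)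
  qed
  finally show ?thesis by (simp add: S_def)
qed

lemma tail:
  assumes g: "good W c L" and i: "i < length W"
  shows "measure_pmf.prob (walk (take i W) 0)
     {tr. tr \<in> Eall (take i W) \<and> snd (W ! i) < \<bar>inner (last tr) (fst (W ! i))\<bar>} \<le> 2 * exp (- L)"
proof -
  obtain f a where Wi: "W ! i = (f, a)" by (cases "W ! i")
  show ?thesis
  proof (cases "f = 0")
    case True
    have "a = 0" using g i Wi True by (auto simp: good_def dest!: spec[of _ i])
    then show ?thesis using True Wi by simp
  next
    case False
    let ?M = "walk (take i W) 0"
    let ?S1 = "{tr. tr \<in> Eall (take i W) \<and> a < inner (last tr) f}"
    let ?S2 = "{tr. tr \<in> Eall (take i W) \<and> a < inner (last tr) (- f)}"
    have "measure_pmf.prob ?M {tr. tr \<in> Eall (take i W) \<and> snd (W ! i) < \<bar>inner (last tr) (fst (W ! i))\<bar>}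
        \<le> measure_pmf.prob ?M (?S1 \<union> ?S2)"
      by (intro measure_pmf.finite_measure_mono) (auto simp: Wi abs_if)
    also have "\<dots> \<le> measure_pmf.prob ?M ?S1 + measure_pmf.prob ?M ?S2"
      by (rule measure_Un_le) auto
    also have "\<dots> \<le> exp (- L) + exp (- L)"
      by (intro add_mono tail_one[OF g i Wi False]) auto
    finally show ?thesis by simp
  qed
qed

lemma last_take_Suc: "i < length tr \<Longrightarrow> last (take (Suc i) tr) = tr ! i"
  by (simp add: take_Suc_conv_app_nth)

lemma KK_le: "4/3 \<le> L \<Longrightarrow> KK L \<le> L"
proof -
  assume L: "4/3 \<le> L"
  have "L * (L - 1) \<ge> 4/3 * (1/3)" using L by (intro mult_mono) auto
  then have "(1/2 + L)\<^sup>2 \<le> L * (2 * L)" by (simp add: power2_eq_square algebra_simps)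
  then show ?thesis using L by (simp add: KK_def divide_le_eq)
qed

lemma walk_prob:
  assumes g: "good W c L"
  shows "1 - 2 * real (length W) * exp (- L) \<le> measure_pmf.prob (walk W 0) (Eall W)"
proof -
  let ?M = "walk W 0"
  let ?m = "length W"
  define Bad where "Bad i = {tr. tr \<in> Eall (take i W) \<and> snd (W ! i) < \<bar>inner (last tr) (fst (W ! i))\<bar>}" for i
  define Z where "Z = {tr :: 'a list. length tr \<noteq> Suc ?m}"
  have cover: "- Eall W \<subseteq> (\<Union>i\<in>{..<?m}. take (Suc i) -` Bad i) \<union> Z"
  proof
    fix tr assume tr: "tr \<in> - Eall W"
    show "tr \<in> (\<Union>i\<in>{..<?m}. take (Suc i) -` Bad i) \<union> Z"
    proof (cases "tr \<in> Z")
      case False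
      then have len: "length tr = Suc ?m" by (simp add: Z_def)
      define P where "P j = (j < ?m \<and> snd (W ! j) < \<bar>inner (tr ! j) (fst (W ! j))\<bar>)" for j
      have "\<exists>j. P j" using tr by (auto simp: Eall_def P_def not_le)
      then obtain i where Pi: "P i" and min: "\<And>j. j < i \<Longrightarrow> \<not> P j"
        by (metis exists_least_iff)
      have im: "i < ?m" using Pi by (simp add: P_def)
      have "take (Suc i) tr \<in> Bad i"
        unfolding Bad_def Eall_def
      proof (intro CollectI conjI allI impI)
        fix j assume "j < length (take i W)"
        then have j: "j < i" using im by simp
        then show "\<bar>inner (take (Suc i) tr ! j) (fst (take i W ! j))\<bar> \<le> snd (take i W ! j)"
          using min[OF j] im by (simp add: P_def not_less)
      next
        show "snd (W ! i) < \<bar>inner (last (take (Suc i) tr)) (fst (W ! i))\<bar>"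
          using Pi len im by (simp add: P_def last_take_Suc)
      qed
      then show ?thesis using im by auto
    qed simp
  qed
  have Z0: "measure_pmf.prob ?M Z = 0"
    using walk_length[of _ W 0] by (auto simp: measure_pmf_zero_iff Z_def)
  have "1 - measure_pmf.prob ?M (Eall W) = measure_pmf.prob ?M (- Eall W)"
    using measure_pmf.prob_compl[of "Eall W" ?M] by (simp add: Compl_eq_Diff_UNIV)
  also have "\<dots> \<le> measure_pmf.prob ?M ((\<Union>i\<in>{..<?m}. take (Suc i) -` Bad i) \<union> Z)"
    by (intro measure_pmf.finite_measure_mono cover) auto
  also have "\<dots> \<le> measure_pmf.prob ?M (\<Union>i\<in>{..<?m}. take (Suc i) -` Bad i) + measure_pmf.prob ?M Z"
    by (rule measure_Un_le) auto
  also have "\<dots> \<le> (\<Sum>i<?m. measure_pmf.prob ?M (take (Suc i) -` Bad i))"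
    using Z0 by (simp add: measure_UNION_le)
  also have "\<dots> = (\<Sum>i<?m. measure_pmf.prob (walk (take i W) 0) (Bad i))"
    by (intro sum.cong refl) (simp flip: walk_take)
  also have "\<dots> \<le> (\<Sum>i<?m. 2 * exp (- L))"
    by (intro sum_mono) (simp add: Bad_def tail[OF g])
  finally show ?thesis by simp
qed

lemma walk_sg:
  assumes g: "good W c L" and L: "4/3 \<le> L" and i: "i \<in> {1..length W}"
  shows "measure_pmf.expectation (walk W 0)
      (\<lambda>tr. exp (inner h ((1 / (2 * real i)) *\<^sub>R (tr ! i))) * indicator (Eall W) tr)
    \<le> exp ((c (i - 1) * sqrt L / (2 * real i))\<^sup>2 / 2 * (norm h)\<^sup>2)"
proof -
  let ?M = "walk W 0"
  define h' where "h' = (1 / (2 * real i)) *\<^sub>R h"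
  define G where "G tr = exp (inner h' (last tr)) * indicator (Eall (take i W)) tr" for tr
  have im: "i \<le> length W" "1 \<le> i" using i by auto
  have "measure_pmf.expectation ?M
      (\<lambda>tr. exp (inner h ((1 / (2 * real i)) *\<^sub>R (tr ! i))) * indicator (Eall W) tr)
     \<le> measure_pmf.expectation ?M (\<lambda>tr. G (take (Suc i) tr))"
  proof (rule exp_mono_pmf[OF walk_finite])
    fix tr assume tr: "tr \<in> set_pmf ?M"
    then have len: "length tr = Suc (length W)" by (rule walk_length)
    have e: "inner h ((1 / (2 * real i)) *\<^sub>R (tr ! i)) = inner h' (last (take (Suc i) tr))"
      using len im by (simp add: h'_def last_take_Suc)
    have "tr \<in> Eall W \<Longrightarrow> take (Suc i) tr \<in> Eall (take i W)"
      using im by (auto simp: Eall_def)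
    then have "indicator (Eall W) tr \<le> (indicator (Eall (take i W)) (take (Suc i) tr) :: real)"
      by (simp add: indicator_def)
    then show "exp (inner h ((1 / (2 * real i)) *\<^sub>R (tr ! i))) * indicator (Eall W) tr \<le> G (take (Suc i) tr)"
      unfolding G_def e by (intro mult_left_mono) auto
  qed
  also have "\<dots> = measure_pmf.expectation (walk (take i W) 0) G"
    by (simp flip: walk_take)
  also have "\<dots> \<le> exp ((c (i - 1))\<^sup>2 * KK L / 2 * (norm h')\<^sup>2)"
    unfolding G_def by (rule SG[OF g im(1)])
  also have "\<dots> \<le> exp ((c (i - 1) * sqrt L / (2 * real i))\<^sup>2 / 2 * (norm h)\<^sup>2)"
  proof -
    have L0: "0 \<le> L" using L by simp
    have "(c (i - 1))\<^sup>2 * KK L / 2 * (norm h')\<^sup>2 \<le> (c (i - 1))\<^sup>2 * L / 2 * (norm h')\<^sup>2"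
      using KK_le[OF L] by (intro mult_right_mono divide_right_mono mult_left_mono) auto
    also have "\<dots> = (c (i - 1) * sqrt L / (2 * real i))\<^sup>2 / 2 * (norm h)\<^sup>2"
      using L0 im by (simp add: h'_def power_mult_distrib power_divide field_simps)
    finally show ?thesis by simp
  qed
  finally show ?thesis .
qed

fun rm :: "('x \<Rightarrow> 'h::real_inner) \<Rightarrow> real \<Rightarrow> ('x \<times> 'x) list \<Rightarrow> nat \<Rightarrow> real" where
  "rm Phi bm [] j = bm"
| "rm Phi bm (p # ps) 0 = max (bp Phi p) bm"
| "rm Phi bm (p # ps) (Suc j) = rm Phi (max (bp Phi p) bm) ps j"

lemma kparams_length: "length (kparams d n Phi bm prs) = length prs"
  by (induction d n Phi bm prs rule: kparams.induct) auto

lemma kparams_nth: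
  "j < length prs \<Longrightarrow> kparams d n Phi bm prs ! j =
     (Phi (fst (prs ! j)) - Phi (snd (prs ! j)), bp Phi (prs ! j) * rm Phi bm prs j * (1/2 + ln (2 * real n / d)))"
proof (induction prs arbitrary: bm j)
  case Nil then show ?case by simp
next
  case (Cons p ps)
  obtain x x' where p: "p = (x, x')" by (cases p)
  show ?case
  proof (cases j)
    case 0 then show ?thesis by (simp add: p)
  next
    case (Suc k)
    then show ?thesis using Cons by (simp add: p)
  qed
qed

lemma rm_Suc: "Suc j < length prs \<Longrightarrow> rm Phi bm prs (Suc j) = max (bp Phi (prs ! Suc j)) (rm Phi bm prs j)"
proof (induction prs arbitrary: bm j)
  case Nil then show ?case by simp
next
  case (Cons p ps)
  show ?case
  proof (cases j)
    case 0
    then obtain q qs where "ps = q # qs" using Cons.prems by (cases ps) auto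
    then show ?thesis using 0 by simp
  next
    case (Suc k)
    then show ?thesis using Cons by simp
  qed
qed

lemma kh_pairs_length: "length (kh_pairs xs) = length xs div 2"
  by (simp add: kh_pairs_def)

lemma kh_pairs_nth: "k < length xs div 2 \<Longrightarrow> kh_pairs xs ! k = (xs ! (2 * k), xs ! (2 * k + 1))"
  by (simp add: kh_pairs_def)

lemma bp_kh_b: "k < length xs div 2 \<Longrightarrow> bp Phi (kh_pairs xs ! k) = kh_b Phi xs (Suc k)"
  by (simp add: kh_pairs_nth bp_def kh_b_def Let_def)

lemma rm_kh: "j < length xs div 2 \<Longrightarrow> rm Phi 0 (kh_pairs xs) j = kh_bmax Phi xs (Suc j)"
proof (induction j)
  case 0
  then obtain p ps where "kh_pairs xs = p # ps"
    by (cases "kh_pairs xs") (auto simp: kh_pairs_length[symmetric])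
  then have "rm Phi 0 (kh_pairs xs) 0 = max (bp Phi (kh_pairs xs ! 0)) 0" by simp
  moreover have "bp Phi (kh_pairs xs ! 0) = kh_b Phi xs (Suc 0)" by (rule bp_kh_b) (use 0 in simp)
  ultimately show ?case by simp
next
  case (Suc j)
  have "bp Phi (kh_pairs xs ! Suc j) = kh_b Phi xs (Suc (Suc j))" by (rule bp_kh_b) (use Suc.prems in simp)
  then show ?case using rm_Suc[of j "kh_pairs xs" Phi 0] Suc
    by (simp add: kh_pairs_length)
qed

lemma bp_norm: "bp Phi (x, x') = norm (Phi x - Phi x')"
  by (simp add: bp_def fm_kernel_def norm_eq_sqrt_inner inner_diff_left inner_diff_right
      inner_commute algebra_simps)

lemma kh_b_norm: "kh_b Phi xs j = norm (Phi (xs ! (2 * j - 2)) - Phi (xs ! (2 * j - 1)))"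
  by (simp add: kh_b_def Let_def fm_kernel_def norm_eq_sqrt_inner inner_diff_left inner_diff_right
      inner_commute algebra_simps)

lemma kh_b_nonneg: "0 \<le> kh_b Phi xs j"
  by (simp add: kh_b_norm)

lemma kh_bmax_mono: "kh_bmax Phi xs i \<le> kh_bmax Phi xs (Suc i)"
  by simp

lemma kh_iter_finite: "finite (set_pmf (kh_iter d n Phi prs st))"
proof (induction prs arbitrary: st)
  case Nil then show ?case by simp
next
  case (Cons p prs)
  have "finite (set_pmf (kh_step d n Phi p st))"
    by (simp add: kh_step_def Let_def UNIV_bool split: prod.splits)
  then show ?case using Cons by simp
qed

lemma L_ge:
  assumes "0 < delta" "delta < 1" "2 \<le> n"
  shows "4/3 \<le> ln (2 * real n / delta)"
proof -
  have "4 \<le> 2 * real n" using assms by simp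
  also have "2 * real n \<le> 2 * real n / delta" using assms by (simp add: le_divide_eq)
  finally have 4: "4 \<le> 2 * real n / delta" .
  have "ln (4::real) = ln 2 + ln 2" using ln_mult[of 2 2] by simp
  then have "4/3 \<le> ln (4::real)" using ln2_ge_two_thirds by simp
  also have "\<dots> \<le> ln (2 * real n / delta)" using 4 by simp
  finally show ?thesis .
qed

lemma mmd_eq:
  fixes Phi :: "'x \<Rightarrow> 'h::real_inner"
  assumes v: "v \<in> span (range Phi)"
    and e: "\<And>f. measure_pmf.expectation p (\<lambda>x. inner f (Phi x)) -
                measure_pmf.expectation q (\<lambda>x. inner f (Phi x)) = inner f v"
  shows "mmd Phi p q = norm v"
proof -
  let ?A = "{f \<in> rkhs Phi. norm f \<le> 1}"
  let ?g = "\<lambda>f. \<bar>measure_pmf.expectation p (\<lambda>x. inner f (Phi x))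
       - measure_pmf.expectation q (\<lambda>x. inner f (Phi x))\<bar>"
  have sp: "span (range Phi) \<subseteq> rkhs Phi" unfolding rkhs_def by (rule closure_subset)
  have "Sup (?g ` ?A) = norm v"
  proof (rule cSup_eq_maximum)
    show "norm v \<in> ?g ` ?A"
    proof (cases "v = 0")
      case True
      have "0 \<in> ?A" using sp span_zero by auto
      then show ?thesis using True e by (auto intro!: image_eqI[where x=0])
    next
      case False
      define f where "f = (1 / norm v) *\<^sub>R v"
      have "f \<in> span (range Phi)" using v by (simp add: f_def span_scale)
      then have fA: "f \<in> ?A" using sp False by (auto simp: f_def)
      have "?g f = \<bar>inner f v\<bar>" by (simp only: e)
      also have "\<dots> = norm v" using False
        by (simp add: f_def power2_norm_eq_inner[symmetric] power2_eq_square)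
      finally have "?g f = norm v" .
      then show ?thesis using fA by (auto intro!: image_eqI[where x=f])
    qed
  next
    fix z assume "z \<in> ?g ` ?A"
    then obtain f where f: "f \<in> ?A" and z: "z = ?g f" by auto
    have "z = \<bar>inner f v\<bar>" using z e by simp
    also have "\<dots> \<le> norm f * norm v" by (rule Cauchy_Schwarz_ineq2)
    also have "\<dots> \<le> 1 * norm v" using f by (intro mult_right_mono) auto
    finally show "z \<le> norm v" by simp
  qed
  then show ?thesis by (simp add: mmd_def)
qed

lemma exp_return: "measure_pmf.expectation (return_pmf x) (f :: _ \<Rightarrow> real) = f x"
  by (subst integral_measure_pmf_real[of "{x}"]) auto

lemma mmd_point: "mmd Phi (return_pmf x) (return_pmf y) = norm (Phi x - Phi y)"
  by (rule mmd_eq) (auto simp: exp_return inner_diff_right span_diff span_base)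

lemma mmd_emp:
  fixes Phi :: "'x \<Rightarrow> 'h::real_inner"
  assumes ne: "xs \<noteq> []"
  defines "P \<equiv> pmf_of_multiset (mset xs)"
  defines "mu \<equiv> (\<Sum>y\<in>set xs. pmf P y *\<^sub>R Phi y)"
  shows "mmd Phi (return_pmf x) P = norm (Phi x - mu)"
proof (rule mmd_eq)
  show "Phi x - mu \<in> span (range Phi)"
    unfolding mu_def by (intro span_diff span_sum span_scale span_base) auto
next
  fix f
  have sP: "set_pmf P = set xs" using ne by (simp add: P_def)
  have "measure_pmf.expectation P (\<lambda>y. inner f (Phi y)) = (\<Sum>y\<in>set xs. inner f (Phi y) * pmf P y)"
    by (rule integral_measure_pmf_real) (auto simp: sP)
  also have "\<dots> = inner f mu" by (simp add: mu_def inner_sum_right mult_ac)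
  finally show "measure_pmf.expectation (return_pmf x) (\<lambda>y. inner f (Phi y)) -
      measure_pmf.expectation P (\<lambda>y. inner f (Phi y)) = inner f (Phi x - mu)"
    by (simp add: exp_return inner_diff_right)
qed

lemma kh_bmax_Max: "1 \<le> i \<Longrightarrow> kh_bmax Phi xs i = Max (kh_b Phi xs ` {1..i})"
proof (induction i rule: dec_induct)
  case base
  then show ?case using kh_b_nonneg[of Phi xs 1] by simp
next
  case (step i)
  have "{1..Suc i} = insert (Suc i) {1..i}" by auto
  then show ?case using step by (simp add: Max_insert)
qed

theorem propositionB2:
  fixes k :: "'x \<Rightarrow> 'x \<Rightarrow> real"
    and Phi :: "'x \<Rightarrow> 'h::{real_inner, complete_space}"
    and xs :: "'x list" and delta :: real
  assumes kernel: "\<And>x y. k x y = inner (Phi x) (Phi y)"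
    and delta: "0 < delta" "delta < 1"
    and n: "even (length xs)" "length xs \<ge> 2"
  shows "(\<exists>E. measure_pmf.prob (KH delta Phi xs) E \<ge> 1 - delta / 2 \<and>
          (\<forall>i \<in> {1..length xs div 2}.
             sub_gaussian_on Phi (KH delta Phi xs) E
               (\<lambda>tr. (1 / (2 * real i)) *\<^sub>R kh_psi (tr ! i))
               (kh_bmax Phi xs i * sqrt (ln (2 * real (length xs) / delta)) / (2 * real i))))
        \<and> (\<forall>i \<in> {1..length xs div 2}.
          kh_bmax Phi xs i * sqrt (ln (2 * real (length xs) / delta)) / (2 * real i)
            = sqrt (ln (2 * real (length xs) / delta)) / (2 * real i)
              * Max ((\<lambda>j. mmd Phi (return_pmf (xs ! (2 * j - 2))) (return_pmf (xs ! (2 * j - 1))))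
                     ` {1..i})
          \<and> sqrt (ln (2 * real (length xs) / delta)) / (2 * real i)
              * Max ((\<lambda>j. mmd Phi (return_pmf (xs ! (2 * j - 2))) (return_pmf (xs ! (2 * j - 1))))
                     ` {1..i})
            \<le> sqrt (ln (2 * real (length xs) / delta)) / (2 * real i) * 2
              * min (Max ((\<lambda>x. sqrt (k x x)) ` set xs))
                    (Max ((\<lambda>x. mmd Phi (return_pmf x) (pmf_of_multiset (mset xs))) ` set xs)))"
proof -
  define nn where "nn = length xs"
  define m where "m = nn div 2"
  define L where "L = ln (2 * real nn / delta)"
  define W where "W = kparams delta nn Phi 0 (kh_pairs xs)"
  define c where "c j = kh_bmax Phi xs (Suc j)" for j
  have lenW: "length W = m" by (simp add: W_def kparams_length kh_pairs_length m_def nn_def)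
  have L43: "4/3 \<le> L" using L_ge[OF delta n(2)] by (simp add: L_def nn_def)
  have Wnth: "W ! j = (Phi (xs ! (2 * j)) - Phi (xs ! (2 * j + 1)), kh_b Phi xs (Suc j) * c j * (1/2 + L))"
    if j: "j < m" for j
  proof -
    have j': "j < length (kh_pairs xs)" using j by (simp add: kh_pairs_length m_def nn_def)
    have "bp Phi (kh_pairs xs ! j) = kh_b Phi xs (Suc j)" by (rule bp_kh_b) (use j in \<open>simp add: m_def nn_def\<close>)
    moreover have "rm Phi 0 (kh_pairs xs) j = c j" unfolding c_def by (rule rm_kh) (use j in \<open>simp add: m_def nn_def\<close>)
    moreover have "kh_pairs xs ! j = (xs ! (2 * j), xs ! (2 * j + 1))" by (rule kh_pairs_nth) (use j in \<open>simp add: m_def nn_def\<close>)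
    ultimately show ?thesis using kparams_nth[OF j', of delta nn Phi 0] by (simp add: W_def L_def)
  qed
  have normf: "norm (Phi (xs ! (2 * j)) - Phi (xs ! (2 * j + 1))) = kh_b Phi xs (Suc j)" for j
    by (simp add: kh_b_norm)
  have good: "good W c L"
    unfolding good_def
  proof (intro conjI allI impI)
    show "0 < L" using L43 by simp
  next
    fix j assume "j < length W"
    then have j: "j < m" by (simp add: lenW)
    show "norm (fst (W ! j)) \<le> c j" using Wnth[OF j] normf[of j] by (simp add: c_def)
    show "snd (W ! j) = norm (fst (W ! j)) * c j * (1 / 2 + L)" using Wnth[OF j] normf[of j] by simp
  next
    fix j show "c j \<le> c (Suc j)" by (simp add: c_def)
  qed
  have link: "map_pmf (map kh_psi) (KH delta Phi xs) = walk W 0"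
    by (simp add: KH_def kh_link W_def nn_def)
  define Ev :: "('x, 'h) kh_state list set" where "Ev = {tr. map kh_psi tr \<in> Eall W}"
  have nn0: "0 < real nn" using n(2) unfolding nn_def by linarith
  have eL: "exp (- L) = delta / (2 * real nn)"
    using nn0 delta by (simp add: L_def exp_minus)
  have m2: "2 * real m = real nn" using n(1) by (auto simp: m_def nn_def elim!: evenE)
  have pr: "1 - delta / 2 \<le> measure_pmf.prob (KH delta Phi xs) Ev"
  proof -
    have "measure_pmf.prob (KH delta Phi xs) Ev = measure_pmf.prob (walk W 0) (Eall W)"
      unfolding link[symmetric] by (simp add: Ev_def vimage_def)
    moreover have "1 - 2 * real (length W) * exp (- L) \<le> measure_pmf.prob (walk W 0) (Eall W)"
      by (rule walk_prob[OF good])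
    moreover have "2 * real (length W) * exp (- L) = delta / 2"
      using nn0 by (simp add: lenW eL m2[symmetric])
    ultimately show ?thesis by simp
  qed
  have sg: "sub_gaussian_on Phi (KH delta Phi xs) Ev
               (\<lambda>tr. (1 / (2 * real i)) *\<^sub>R kh_psi (tr ! i))
               (kh_bmax Phi xs i * sqrt (ln (2 * real (length xs) / delta)) / (2 * real i))"
    if i: "i \<in> {1..length xs div 2}" for i
    unfolding sub_gaussian_on_def
  proof (intro ballI)
    fix f :: 'h
    define F where "F ys = exp (inner f ((1 / (2 * real i)) *\<^sub>R (ys ! i))) * indicator (Eall W) ys" for ys
    have iW: "i \<in> {1..length W}" using i by (simp add: lenW m_def nn_def)
    have "measure_pmf.expectation (KH delta Phi xs)
        (\<lambda>w. exp (inner f ((1 / (2 * real i)) *\<^sub>R kh_psi (w ! i))) * indicator Ev w)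
      \<le> measure_pmf.expectation (KH delta Phi xs) (\<lambda>w. F (map kh_psi w))"
    proof (rule exp_mono_pmf)
      show "finite (set_pmf (KH delta Phi xs))" by (simp add: KH_def kh_iter_finite)
    next
      fix w assume w: "w \<in> set_pmf (KH delta Phi xs)"
      then have "map kh_psi w \<in> set_pmf (walk W 0)" unfolding link[symmetric] by simp
      then have "length w = Suc (length W)" using walk_length by fastforce
      then have "i < length w" using iW by simp
      then show "exp (inner f ((1 / (2 * real i)) *\<^sub>R kh_psi (w ! i))) * indicator Ev w \<le> F (map kh_psi w)"
        by (simp add: F_def Ev_def indicator_def)
    qed
    also have "\<dots> = measure_pmf.expectation (walk W 0) F"
      unfolding link[symmetric] by simp
    also have "\<dots> \<le> exp ((c (i - 1) * sqrt L / (2 * real i))\<^sup>2 / 2 * (norm f)\<^sup>2)"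
      unfolding F_def by (rule walk_sg[OF good L43 iW])
    also have "c (i - 1) * sqrt L / (2 * real i) =
        kh_bmax Phi xs i * sqrt (ln (2 * real (length xs) / delta)) / (2 * real i)"
      using i by (simp add: c_def L_def nn_def)
    finally show "measure_pmf.expectation (KH delta Phi xs)
        (\<lambda>w. exp (inner f ((1 / (2 * real i)) *\<^sub>R kh_psi (w ! i))) * indicator Ev w)
      \<le> exp ((kh_bmax Phi xs i * sqrt (ln (2 * real (length xs) / delta)) / (2 * real i))\<^sup>2 / 2 * (norm f)\<^sup>2)" .
  qed
  have part1: "\<exists>E. measure_pmf.prob (KH delta Phi xs) E \<ge> 1 - delta / 2 \<and>
          (\<forall>i \<in> {1..length xs div 2}.
             sub_gaussian_on Phi (KH delta Phi xs) E
               (\<lambda>tr. (1 / (2 * real i)) *\<^sub>R kh_psi (tr ! i))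
               (kh_bmax Phi xs i * sqrt (ln (2 * real (length xs) / delta)) / (2 * real i)))"
    using pr sg by blast
  have part2: "\<forall>i \<in> {1..length xs div 2}.
          kh_bmax Phi xs i * sqrt (ln (2 * real (length xs) / delta)) / (2 * real i)
            = sqrt (ln (2 * real (length xs) / delta)) / (2 * real i)
              * Max ((\<lambda>j. mmd Phi (return_pmf (xs ! (2 * j - 2))) (return_pmf (xs ! (2 * j - 1))))
                     ` {1..i})
          \<and> sqrt (ln (2 * real (length xs) / delta)) / (2 * real i)
              * Max ((\<lambda>j. mmd Phi (return_pmf (xs ! (2 * j - 2))) (return_pmf (xs ! (2 * j - 1))))
                     ` {1..i})
            \<le> sqrt (ln (2 * real (length xs) / delta)) / (2 * real i) * 2
              * min (Max ((\<lambda>x. sqrt (k x x)) ` set xs))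
                    (Max ((\<lambda>x. mmd Phi (return_pmf x) (pmf_of_multiset (mset xs))) ` set xs))"
  proof
    fix i assume i: "i \<in> {1..length xs div 2}"
    define s where "s = sqrt (ln (2 * real (length xs) / delta)) / (2 * real i)"
    define A where "A = Max ((\<lambda>x. sqrt (k x x)) ` set xs)"
    define B where "B = Max ((\<lambda>x. mmd Phi (return_pmf x) (pmf_of_multiset (mset xs))) ` set xs)"
    have s0: "0 \<le> s" using L43 i by (simp add: s_def L_def nn_def)
    have geq: "(\<lambda>j. mmd Phi (return_pmf (xs ! (2 * j - 2))) (return_pmf (xs ! (2 * j - 1)))) ` {1..i}
        = kh_b Phi xs ` {1..i}"
      by (intro image_cong refl) (simp add: mmd_point kh_b_norm)
    have ne: "xs \<noteq> []" using n(2) by auto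
    have bnd: "kh_b Phi xs j \<le> 2 * min A B" if j: "j \<in> {1..i}" for j
    proof -
      define x where "x = xs ! (2 * j - 2)"
      define x' where "x' = xs ! (2 * j - 1)"
      have jl: "2 * j - 1 < length xs" "2 * j - 2 < length xs" using j i by auto
      have xin: "x \<in> set xs" "x' \<in> set xs" using jl by (auto simp: x_def x'_def)
      have kb: "kh_b Phi xs j = norm (Phi x - Phi x')" by (simp add: kh_b_norm x_def x'_def)
      have sk: "sqrt (k y y) = norm (Phi y)" for y by (simp add: kernel norm_eq_sqrt_inner)
      have "kh_b Phi xs j \<le> norm (Phi x) + norm (Phi x')" unfolding kb by (rule norm_triangle_ineq4)
      also have "\<dots> \<le> A + A"
        using xin by (intro add_mono) (auto simp: A_def sk[symmetric] intro!: Max_ge)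
      finally have 1: "kh_b Phi xs j \<le> 2 * A" by simp
      define mu where "mu = (\<Sum>y\<in>set xs. pmf (pmf_of_multiset (mset xs)) y *\<^sub>R Phi y)"
      have me: "mmd Phi (return_pmf y) (pmf_of_multiset (mset xs)) = norm (Phi y - mu)" for y
        unfolding mu_def by (rule mmd_emp[OF ne])
      have "kh_b Phi xs j = norm ((Phi x - mu) - (Phi x' - mu))" unfolding kb by simp
      also have "\<dots> \<le> norm (Phi x - mu) + norm (Phi x' - mu)" by (rule norm_triangle_ineq4)
      also have "\<dots> \<le> B + B"
        using xin by (intro add_mono) (auto simp: B_def me[symmetric] intro!: Max_ge)
      finally have 2: "kh_b Phi xs j \<le> 2 * B" by simp
      from 1 2 show ?thesis by (simp add: min_def)
    qed
    have mx: "Max (kh_b Phi xs ` {1..i}) \<le> 2 * min A B"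
      using i by (intro Max.boundedI) (auto intro: bnd)
    have "kh_bmax Phi xs i * sqrt (ln (2 * real (length xs) / delta)) / (2 * real i)
        = s * Max (kh_b Phi xs ` {1..i})"
      using i by (simp add: kh_bmax_Max s_def)
    moreover have "s * Max (kh_b Phi xs ` {1..i}) \<le> s * 2 * min A B"
      using mult_left_mono[OF mx s0] by simp
    ultimately show "kh_bmax Phi xs i * sqrt (ln (2 * real (length xs) / delta)) / (2 * real i)
            = sqrt (ln (2 * real (length xs) / delta)) / (2 * real i)
              * Max ((\<lambda>j. mmd Phi (return_pmf (xs ! (2 * j - 2))) (return_pmf (xs ! (2 * j - 1))))
                     ` {1..i})
          \<and> sqrt (ln (2 * real (length xs) / delta)) / (2 * real i)
              * Max ((\<lambda>j. mmd Phi (return_pmf (xs ! (2 * j - 2))) (return_pmf (xs ! (2 * j - 1))))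
                     ` {1..i})
            \<le> sqrt (ln (2 * real (length xs) / delta)) / (2 * real i) * 2
              * min (Max ((\<lambda>x. sqrt (k x x)) ` set xs))
                    (Max ((\<lambda>x. mmd Phi (return_pmf x) (pmf_of_multiset (mset xs))) ` set xs))"
      unfolding geq s_def[symmetric] A_def[symmetric] B_def[symmetric] by simp
  qed
  show ?thesis using part1 part2 by blast
qed

end
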